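(* Let $(X,\cdot)$ be a Rump right quasigroup and let $R: X\times X \to X \times X$, $R(x,y) = (y(x/y),\, x/y)$, with $\nu(x,y) = y(x/y)$ and $\mu(x,y) = x/y$ its two components. Let $(C^{YB}_n(X), \partial^{YB}_n)$ be the set-theoretic Yang-Baxter chain complex of $R$ (defined in the context), and for $n \ge 2$ let $C^D_n(X) \subseteq C^{YB}_n(X)$ be the subgroup spanned by all tuples of the form $(x_1,\ldots,x_{i-1}, x_i x_i, x_i, x_{i+1},\ldots,x_{n-1})$ with $1 \le i \le n-1$ and $x_1,\ldots,x_{n-1}\in X$, and let $C^D_n(X) = 0$ for $n \le 1$. Then $\partial^{YB}_n\bigl(C^D_n(X)\bigr) \subseteq C^D_{n-1}(X)$ for all $n$, i.e. $(C^D_n(X), \partial^{YB}_n)$ is a sub-chain complex of $(C^{YB}_n(X),\partial^{YB}_n)$.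
   Context: A right quasigroup is a magma in which every right translation $y\mapsto yx$ is bijective; $x/y$ denotes the unique $w$ with $wy=x$. A Rump right quasigroup is a right quasigroup with $(zx)(yx)=(zy)(xy)$ for all $x,y,z$. Set-theoretic Yang-Baxter chain complex: $C^{YB}_n(X)$ is the free abelian group on $X^n$ ($n\ge 0$; $X^0$ is a single point). For $1\le i\le n$ define face maps $d^l_{i,n}, d^r_{i,n}: X^n \to X^{n-1}$ (extended linearly) as follows. $d^l_{1,n}$ deletes the first coordinate; for $i\ge 2$, $d^l_{i,n}$ applies $R$ to the coordinates in positions $(i-1,i)$, then to positions $(i-2,i-1)$, ..., then to positions $(2,3)$, and finally replaces the first two coordinates $(a,b)$ by the single coordinate $\mu(a,b)$; i.e. $d^l_{i,n} = (\mu \times \mathrm{Id}^{\times(n-2)})\circ(\mathrm{Id}\times R\times \mathrm{Id}^{\times(n-3)})\circ\cdots\circ(\mathrm{Id}^{\times(i-2)}\times R\times\mathrm{Id}^{\times(n-i)})$. Symmetrically, $d^r_{n,n}$ deletes the last coordinate; for $i \le n-1$, $d^r_{i,n} = (\mathrm{Id}^{\times(n-2)}\times\nu)\circ(\mathrm{Id}^{\times(n-3)}\times R\times\mathrm{Id})\circ\cdots\circ(\mathrm{Id}^{\times(i-1)}\times R\times \mathrm{Id}^{\times(n-i-1)})$, i.e. apply $R$ at positions $(i,i+1)$, then $(i+1,i+2)$, ..., $(n-2,n-1)$, then replace the last two coordinates $(a,b)$ by $\nu(a,b)$. The boundary is $\partial^{YB}_n = \sum_{i=1}^n (-1)^{i+1}(d^l_{i,n}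 - d^r_{i,n})$; it satisfies $\partial^{YB}_{n-1}\circ\partial^{YB}_n = 0$. For example $\partial^{YB}_3(x,y,z) = (y,z) - (y(x/y), z((x/y)/z)) - (x/y,z) + (x, z(y/z)) + (x/(z(y/z)), y/z) - (x,y)$. *)

theory Defs
  imports Main "HOL-Library.Poly_Mapping"
begin

definition right_quasigroup :: "('a \<Rightarrow> 'a \<Rightarrow> 'a) \<Rightarrow> bool" where
  "right_quasigroup m \<longleftrightarrow> (\<forall>x. bij (\<lambda>y. m y x))"

definition rdiv :: "('a \<Rightarrow> 'a \<Rightarrow> 'a) \<Rightarrow> 'a \<Rightarrow> 'a \<Rightarrow> 'a" where
  "rdiv m x y = (THE w. m w y = x)"

definition rump_right_quasigroup :: "('a \<Rightarrow> 'a \<Rightarrow> 'a) \<Rightarrow> bool" where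
  "rump_right_quasigroup m \<longleftrightarrow> right_quasigroup m \<and>
     (\<forall>x y z. m (m z x) (m y x) = m (m z y) (m x y))"

definition nu :: "('a \<Rightarrow> 'a \<Rightarrow> 'a) \<Rightarrow> 'a \<Rightarrow> 'a \<Rightarrow> 'a" where
  "nu m x y = m y (rdiv m x y)"

definition mu :: "('a \<Rightarrow> 'a \<Rightarrow> 'a) \<Rightarrow> 'a \<Rightarrow> 'a \<Rightarrow> 'a" where
  "mu m x y = rdiv m x y"

text \<open>Apply R at the (1-based) positions (j, j+1) of a tuple (list).\<close>

definition R_at :: "('a \<Rightarrow> 'a \<Rightarrow> 'a) \<Rightarrow> nat \<Rightarrow> 'a list \<Rightarrow> 'a list" where
  "R_at m j xs = (let a = xs ! (j - 1); b = xs ! j in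
      take (j - 1) xs @ [nu m a b, mu m a b] @ drop (j + 1) xs)"

definition dl :: "('a \<Rightarrow> 'a \<Rightarrow> 'a) \<Rightarrow> nat \<Rightarrow> 'a list \<Rightarrow> 'a list" where
  "dl m i xs = (if i = 1 then tl xs else
      (let ys = fold (R_at m) (rev [2..<i]) xs in mu m (ys ! 0) (ys ! 1) # drop 2 ys))"

definition dr :: "('a \<Rightarrow> 'a \<Rightarrow> 'a) \<Rightarrow> nat \<Rightarrow> 'a list \<Rightarrow> 'a list" where
  "dr m i xs = (if i = length xs then butlast xs else
      (let ys = fold (R_at m) [i..<length xs - 1] xs; n = length ys in
         take (n - 2) ys @ [nu m (ys ! (n - 2)) (ys ! (n - 1))]))"

definition boundary_gen :: "('a \<Rightarrow> 'a \<Rightarrow> 'a) \<Rightarrow> nat \<Rightarrow> 'a list \<Rightarrow> 'a list \<Rightarrow>\<^sub>0 int" where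
  "boundary_gen m n xs = (\<Sum>i\<in>{1..n}. frag_cmul ((-1) ^ (i + 1)) (frag_of (dl m i xs) - frag_of (dr m i xs)))"

definition YB_boundary :: "('a \<Rightarrow> 'a \<Rightarrow> 'a) \<Rightarrow> nat \<Rightarrow> ('a list \<Rightarrow>\<^sub>0 int) \<Rightarrow> 'a list \<Rightarrow>\<^sub>0 int" where
  "YB_boundary m n c = frag_extend (boundary_gen m n) c"

definition C_YB :: "nat \<Rightarrow> ('a list \<Rightarrow>\<^sub>0 int) set" where
  "C_YB n = {c. \<forall>t \<in> Poly_Mapping.keys c. length t = n}"

inductive_set span_gen :: "'b set \<Rightarrow> ('b \<Rightarrow>\<^sub>0 int) set" for S where
  zero: "0 \<in> span_gen S"
| gen: "t \<in> S \<Longrightarrow> frag_of t \<in> span_gen S"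
| neg: "c \<in> span_gen S \<Longrightarrow> - c \<in> span_gen S"
| add: "c \<in> span_gen S \<Longrightarrow> d \<in> span_gen S \<Longrightarrow> c + d \<in> span_gen S"

definition D_gens :: "('a \<Rightarrow> 'a \<Rightarrow> 'a) \<Rightarrow> nat \<Rightarrow> 'a list set" where
  "D_gens m n = {take (i - 1) xs @ [m (xs ! (i - 1)) (xs ! (i - 1)), xs ! (i - 1)] @ drop i xs
                   | xs i. 2 \<le> n \<and> length xs = n - 1 \<and> 1 \<le> i \<and> i \<le> n - 1}"

definition C_D :: "('a \<Rightarrow> 'a \<Rightarrow> 'a) \<Rightarrow> nat \<Rightarrow> ('a list \<Rightarrow>\<^sub>0 int) set" where
  "C_D m n = (if 2 \<le> n then span_gen (D_gens m n) else {0})"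

end

theory Submission
  imports Defs
begin

lemma R_at_L1: "1 \<le> k \<Longrightarrow> k < length p \<Longrightarrow> R_at m k (p @ r) = R_at m k p @ r"
  unfolding R_at_def Let_def by (auto simp: nth_append)

lemma R_at_L2: "length p < k \<Longrightarrow> R_at m k (p @ r) = p @ R_at m (k - length p) r"
  unfolding R_at_def Let_def by (auto simp: nth_append Suc_diff_le)

lemma R_at_L3: "R_at m (Suc (length p)) (p @ u # v # r) = p @ nu m u v # mu m u v # r"
  unfolding R_at_def Let_def by (simp add: nth_append)

lemma R_at_1: "R_at m (Suc 0) (u # r) = nu m u (r ! 0) # mu m u (r ! 0) # tl r"
  unfolding R_at_def Let_def by (simp add: drop_Suc)

lemma R_at_len: "1 \<le> k \<Longrightarrow> k < length xs \<Longrightarrow> length (R_at m k xs) = length xs"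
  unfolding R_at_def Let_def by simp

lemma fold_len: "\<forall>k\<in>set ks. 1 \<le> k \<and> k < length xs \<Longrightarrow> length (fold (R_at m) ks xs) = length xs"
  by (induction ks arbitrary: xs) (auto simp: R_at_len)

lemma fold_F1: "\<forall>k\<in>set ks. 1 \<le> k \<and> k < length p \<Longrightarrow> fold (R_at m) ks (p @ r) = fold (R_at m) ks p @ r"
  by (induction ks arbitrary: p) (auto simp: R_at_len R_at_L1)

lemma fold_F2: "\<forall>k\<in>set ks. length p < k \<Longrightarrow> \<exists>r'. fold (R_at m) ks (p @ r) = p @ r'"
proof (induction ks arbitrary: r)
  case Nil then show ?case by simp
next
  case (Cons k ks)
  then show ?case by (simp add: R_at_L2)
qed

lemma Dg_intro: "t = p @ [m b b, b] @ q \<Longrightarrow> length t = n \<Longrightarrow> t \<in> D_gens m n"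
  unfolding D_gens_def
  apply (rule CollectI)
  apply (rule exI[of _ "p @ b # q"])
  apply (rule exI[of _ "Suc (length p)"])
  by (auto simp: nth_append)

lemma Dg_elim: "t \<in> D_gens m n \<Longrightarrow> \<exists>p a q. t = p @ [m a a, a] @ q \<and> length t = n"
  unfolding D_gens_def
  apply clarify
  subgoal for xs i
    apply (rule exI[of _ "take (i - 1) xs"])
    apply (rule exI[of _ "xs ! (i - 1)"])
    apply (rule exI[of _ "drop i xs"])
    by auto
  done


lemma length_dl: "1 \<le> j \<Longrightarrow> j \<le> length t \<Longrightarrow> 2 \<le> length t \<Longrightarrow> length (dl m j t) = length t - 1"
proof (cases "j = 1")
  case True then show ?thesis by (simp add: dl_def)
next
  case False
  assume a: "1 \<le> j" "j \<le> length t" "2 \<le> length t"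
  have "length (fold (R_at m) (rev [2..<j]) t) = length t"
    using a by (intro fold_len) auto
  then show ?thesis using False a by (simp add: dl_def Let_def)
qed

lemma length_dr: "1 \<le> j \<Longrightarrow> j \<le> length t \<Longrightarrow> 2 \<le> length t \<Longrightarrow> length (dr m j t) = length t - 1"
proof (cases "j = length t")
  case True then show ?thesis by (simp add: dr_def)
next
  case False
  assume a: "1 \<le> j" "j \<le> length t" "2 \<le> length t"
  have "length (fold (R_at m) [j..<length t - 1] t) = length t"
    using a by (intro fold_len) auto
  then show ?thesis using False a by (simp add: dr_def Let_def)
qed

lemma rq_div1:
  assumes "right_quasigroup m"
  shows "m (rdiv m x y) y = x"
proof -
  have "bij (\<lambda>w. m w y)" using assms unfolding right_quasigroup_def by blast
  then have "\<exists>!w. m w y = x" by (metis (mono_tags, lifting) bij_iff)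
  then show ?thesis unfolding rdiv_def by (rule theI')
qed

lemma rq_div2:
  assumes "right_quasigroup m"
  shows "rdiv m (m w y) y = w"
proof -
  have "bij (\<lambda>w. m w y)" using assms unfolding right_quasigroup_def by blast
  then have "inj (\<lambda>w. m w y)" by (simp add: bij_is_inj)
  then show ?thesis using rq_div1[OF assms, of "m w y" y] by (meson injD)
qed



lemma frag_cmul_diff2: "frag_cmul c (a - b) = frag_cmul c a - frag_cmul c b"
  by (rule poly_mapping_eqI) (simp add: lookup_minus right_diff_distrib)

lemma span_diff: "c \<in> span_gen S \<Longrightarrow> d \<in> span_gen S \<Longrightarrow> c - d \<in> span_gen S"
  by (metis diff_conv_add_uminus span_gen.add span_gen.neg)

lemma span_sum: "finite A \<Longrightarrow> (\<And>x. x \<in> A \<Longrightarrow> f x \<in> span_gen S) \<Longrightarrow> sum f A \<in> span_gen S"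
  by (induction A rule: finite_induct) (auto intro: span_gen.intros)

lemma span_sign: "x \<in> S \<Longrightarrow> frag_cmul ((-1) ^ k) (frag_of x) \<in> span_gen S"
  by (cases "even k") (auto intro: span_gen.intros)

lemma span_empty: "c \<in> span_gen {} \<Longrightarrow> c = 0"
  by (induction rule: span_gen.induct) auto

lemma sum_pair:
  assumes "finite A" "i \<in> A" "Suc i \<in> A" "g i = g (Suc i)"
    and "\<And>j. j \<in> A \<Longrightarrow> j \<noteq> i \<Longrightarrow> j \<noteq> Suc i \<Longrightarrow> g j \<in> S"
  shows "(\<Sum>j\<in>A. frag_cmul ((-1) ^ (j + 1)) (frag_of (g j))) \<in> span_gen S"
proof -
  let ?f = "\<lambda>j. frag_cmul ((-1) ^ (j + 1)) (frag_of (g j))"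
  have "sum ?f A = sum ?f (A - {i, Suc i}) + sum ?f {i, Suc i}"
    using assms(1-3) by (intro sum.subset_diff) auto
  moreover have "sum ?f {i, Suc i} = 0"
  proof -
    have "sum ?f {i, Suc i} = ?f i + ?f (Suc i)" by simp
    also have "\<dots> = frag_cmul ((-1) ^ (i + 1) + (-1) ^ (Suc i + 1)) (frag_of (g i))"
      by (subst assms(4)[symmetric]) (rule frag_cmul_distrib[symmetric])
    also have "\<dots> = 0" by simp
    finally show ?thesis .
  qed
  moreover have "sum ?f (A - {i, Suc i}) \<in> span_gen S"
    using assms(1,5) by (intro span_sum span_sign) auto
  ultimately show ?thesis by simp
qed

context
  fixes m :: "'a \<Rightarrow> 'a \<Rightarrow> 'a"
  assumes rump: "rump_right_quasigroup m"
begin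

lemma rq: "right_quasigroup m" using rump unfolding rump_right_quasigroup_def by blast
lemma rumpeq: "m (m z x) (m y x) = m (m z y) (m x y)" using rump unfolding rump_right_quasigroup_def by blast

lemma mu_sq: "mu m (m a a) a = a"
  unfolding mu_def by (rule rq_div2[OF rq])

lemma nu_sq: "nu m (m a a) a = m a a"
  unfolding nu_def mu_sq[unfolded mu_def] by simp

lemma rump_l: "mu m (m a a) (nu m a c) = m (mu m a c) (mu m a c)"
proof -
  define u where "u = mu m a c"
  have a: "a = m u c" unfolding u_def mu_def by (simp add: rq_div1[OF rq])
  have "nu m a c = m c u" unfolding nu_def u_def mu_def by simp
  moreover have "m a a = m (m u u) (m c u)" using rumpeq[of u u c] a by simp
  ultimately have "mu m (m a a) (nu m a c) = m u u" unfolding mu_def by (simp add: rq_div2[OF rq])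
  then show ?thesis unfolding u_def .
qed

lemma rump_r: "nu m c (m a a) = m (nu m (mu m c (m a a)) a) (nu m (mu m c (m a a)) a)"
proof -
  define t where "t = mu m c (m a a)"
  define s where "s = mu m t a"
  have ts: "t = m s a" unfolding s_def mu_def by (simp add: rq_div1[OF rq])
  have "nu m t a = m a s" unfolding nu_def s_def mu_def by simp
  moreover have "nu m c (m a a) = m (m a a) t" unfolding nu_def t_def mu_def by simp
  ultimately show ?thesis unfolding t_def[symmetric] using rumpeq[of a a s] ts by simp
qed


lemma DL_eq: "dl m (Suc (length p)) (p @ [m a a, a] @ q) = dl m (Suc (Suc (length p))) (p @ [m a a, a] @ q)"
proof (cases "p = []")
  case True then show ?thesis by (simp add: dl_def mu_sq)
next
  case False
  let ?i = "Suc (length p)"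
  have r: "rev [2..<Suc ?i] = ?i # rev [2..<?i]" using False by (cases p) auto
  have "R_at m ?i (p @ [m a a, a] @ q) = p @ [m a a, a] @ q"
    using R_at_L3[of m p "m a a" a q] by (simp add: mu_sq nu_sq)
  moreover have "1 \<le> length p" using False by (cases p) auto
  ultimately show ?thesis using False by (simp add: dl_def r)
qed

lemma DR_eq: "dr m (Suc (length p)) (p @ [m a a, a] @ q) = dr m (Suc (Suc (length p))) (p @ [m a a, a] @ q)"
proof (cases "q = []")
  case True then show ?thesis by (simp add: dr_def nth_append nu_sq butlast_append)
next
  case False
  let ?i = "Suc (length p)"
  let ?t = "p @ [m a a, a] @ q"
  have lt: "?i < length ?t - 1" using False by (cases q) auto
  have r: "[?i..<length ?t - 1] = ?i # [Suc ?i..<length ?t - 1]" using lt upt_conv_Cons by blast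
  have Req: "R_at m ?i ?t = ?t"
    using R_at_L3[of m p "m a a" a q] by (simp add: mu_sq nu_sq)
  have ne1: "?i \<noteq> length ?t" and ne2: "Suc ?i \<noteq> length ?t" using lt by auto
  show ?thesis unfolding dr_def by (simp only: ne1 ne2 if_False r fold_Cons o_apply Req)
qed


lemma dl_ne1: "j \<noteq> 1 \<Longrightarrow> dl m j t = (let ys = fold (R_at m) (rev [2..<j]) t in mu m (ys ! 0) (ys ! 1) # drop 2 ys)"
  by (simp add: dl_def)

lemma DL_form:
  assumes j: "1 \<le> j" "j \<le> length t" "j \<noteq> Suc (length p)" "j \<noteq> Suc (Suc (length p))"
    and t: "t = p @ [m a a, a] @ q"
  shows "\<exists>p0 b q0. dl m j t = p0 @ [m b b, b] @ q0"
proof -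
  consider "j = 1" | "2 \<le> j" "j \<le> length p" | "Suc (Suc (Suc (length p))) \<le> j"
    using j by linarith
  then show ?thesis
  proof cases
    case 1
    then have "p \<noteq> []" using j by auto
    then have "dl m j t = tl p @ [m a a, a] @ q" using 1 t by (simp add: dl_def)
    then show ?thesis by blast
  next
    case 2
    have kk: "\<forall>k\<in>set (rev [2..<j]). 1 \<le> k \<and> k < length p" using 2 by auto
    define p' where "p' = fold (R_at m) (rev [2..<j]) p"
    have ys: "fold (R_at m) (rev [2..<j]) t = p' @ [m a a, a] @ q"
      unfolding t p'_def by (rule fold_F1[OF kk])
    have "length p' = length p" unfolding p'_def using kk by (intro fold_len) auto
    then obtain x0 x1 p'' where p': "p' = x0 # x1 # p''" using 2
      by (metis Suc_le_length_iff numeral_2_eq_2 le_trans)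
    have "dl m j t = mu m x0 x1 # p'' @ [m a a, a] @ q"
      using 2 by (simp add: dl_ne1 ys p')
    then show ?thesis by (metis append_Cons)
  next
    case 3
    define i where "i = Suc (length p)"
    have e: "Suc (Suc (length p)) + (j - Suc (Suc (length p))) = j" using 3 by simp
    have le: "2 \<le> Suc (Suc (length p))" by simp
    have sp: "[2..<j] = [2..<Suc i] @ [Suc i..<j]" unfolding i_def
      using upt_add_eq_append[OF le, of "j - Suc (Suc (length p))"] unfolding e .
    have sp2: "[Suc i..<j] = Suc i # [Suc (Suc i)..<j]" using 3 unfolding i_def
      by (intro upt_conv_Cons) auto
    have rv: "rev [2..<j] = rev [Suc (Suc i)..<j] @ [Suc i] @ rev [2..<Suc i]"
      by (simp only: sp sp2 rev_append rev.simps(2) append_assoc append_Cons append_Nil)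
    have kA: "\<forall>k\<in>set (rev [Suc (Suc i)..<j]). length (p @ [m a a, a]) < k"
      unfolding i_def by auto
    obtain q2 where A: "fold (R_at m) (rev [Suc (Suc i)..<j]) t = (p @ [m a a, a]) @ q2"
      using fold_F2[OF kA, of m q] t by auto
    define c where "c = q2 ! 0"
    have B: "R_at m (Suc i) ((p @ [m a a, a]) @ q2) = p @ [m a a, nu m a c, mu m a c] @ tl q2"
    proof -
      have "R_at m (Suc i) ((p @ [m a a, a]) @ q2) = R_at m (Suc i) ((p @ [m a a]) @ (a # q2))" by simp
      also have "\<dots> = (p @ [m a a]) @ R_at m 1 (a # q2)"
        by (subst R_at_L2) (auto simp: i_def)
      finally show ?thesis by (simp add: R_at_1 c_def)
    qed
    define u where "u = mu m a c"
    have uu: "mu m (m a a) (nu m a c) = m u u" unfolding u_def by (rule rump_l)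
    show ?thesis
    proof (cases "p = []")
      case True
      then have "rev [2..<Suc i] = []" unfolding i_def by simp
      then have ys: "fold (R_at m) (rev [2..<j]) t = [m a a, nu m a c, mu m a c] @ tl q2"
        using A B True by (simp add: rv)
      have "j \<noteq> 1" using 3 by auto
      then have "dl m j t = [] @ [m u u, u] @ tl q2"
        by (simp add: dl_ne1 ys uu u_def)
      then show ?thesis by blast
    next
      case False
      then have r2: "rev [2..<Suc i] = i # rev [2..<i]" unfolding i_def by (cases p) auto
      define w where "w = nu m (m a a) (nu m a c)"
      have C: "R_at m i (p @ [m a a, nu m a c, mu m a c] @ tl q2) = (p @ [w]) @ [m u u, u] @ tl q2"
        unfolding i_def using R_at_L3[of m p "m a a" "nu m a c" "mu m a c # tl q2"]
        by (simp add: w_def uu u_def)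
      have kD: "\<forall>k\<in>set (rev [2..<i]). 1 \<le> k \<and> k < length (p @ [w])" unfolding i_def by auto
      define p3 where "p3 = fold (R_at m) (rev [2..<i]) (p @ [w])"
      have D: "fold (R_at m) (rev [2..<i]) ((p @ [w]) @ [m u u, u] @ tl q2) = p3 @ [m u u, u] @ tl q2"
        unfolding p3_def by (rule fold_F1[OF kD])
      have i2: "2 \<le> i" using False unfolding i_def by (cases p) auto
      have ys: "fold (R_at m) (rev [2..<j]) t = p3 @ [m u u, u] @ tl q2"
        using A B C D i2 by (simp add: rv r2)
      have "length p3 = length (p @ [w])" unfolding p3_def using kD by (intro fold_len) auto
      then have "length p3 \<ge> 2" using False by (cases p) auto
      then obtain x0 x1 p4 where p3: "p3 = x0 # x1 # p4"
        by (metis Suc_le_length_iff numeral_2_eq_2 le_trans)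
      have "j \<noteq> 1" using 3 by auto
      then have "dl m j t = (mu m x0 x1 # p4) @ [m u u, u] @ tl q2"
        by (simp add: dl_ne1 ys p3)
      then show ?thesis by blast
    qed
  qed
qed


lemma dr_ne: "j \<noteq> length t \<Longrightarrow> dr m j t = (let ys = fold (R_at m) [j..<length t - 1] t; n = length ys in
         take (n - 2) ys @ [nu m (ys ! (n - 2)) (ys ! (n - 1))])"
  by (simp add: dr_def)

lemma DR_form:
  assumes j: "1 \<le> j" "j \<le> length t" "j \<noteq> Suc (length p)" "j \<noteq> Suc (Suc (length p))"
    and t: "t = p @ [m a a, a] @ q"
  shows "\<exists>p0 b q0. dr m j t = p0 @ [m b b, b] @ q0"
proof -
  have lt: "length t = length p + length q + 2" using t by simp
  consider "j = length t" | "Suc (Suc (Suc (length p))) \<le> j" "j < length t" | "j \<le> length p"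
    using j by linarith
  then show ?thesis
  proof cases
    case 1
    then have "q \<noteq> []" using j lt by auto
    then have "dr m j t = p @ [m a a, a] @ butlast q" using 1 t by (simp add: dr_def butlast_append)
    then show ?thesis by blast
  next
    case 2
    have kA: "\<forall>k\<in>set [j..<length t - 1]. length (p @ [m a a, a]) < k" using 2 by auto
    obtain q' where A: "fold (R_at m) [j..<length t - 1] t = (p @ [m a a, a]) @ q'"
      using fold_F2[OF kA, of m q] t by auto
    have "length (fold (R_at m) [j..<length t - 1] t) = length t" using j by (intro fold_len) auto
    then have ln: "length ((p @ [m a a, a]) @ q') = length t" using A by simp
    have ge: "length t - 2 \<ge> length (p @ [m a a, a])" using 2 by simp
    have "dr m j t = p @ [m a a, a] @ (take (length t - 2 - length (p @ [m a a, a])) q' @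
        [nu m (((p @ [m a a, a]) @ q') ! (length t - 2)) (((p @ [m a a, a]) @ q') ! (length t - 1))])"
      unfolding dr_ne[OF \<open>j < length t\<close>[THEN less_imp_neq]] Let_def A ln using ge by (simp add: take_append take_Cons')
    then show ?thesis by blast
  next
    case 3
    have kA: "\<forall>k\<in>set [j..<length p]. 1 \<le> k \<and> k < length p" using 3 j by auto
    define p1 where "p1 = fold (R_at m) [j..<length p] p"
    have A: "fold (R_at m) [j..<length p] t = p1 @ [m a a, a] @ q"
      unfolding t p1_def by (rule fold_F1[OF kA])
    have lp1: "length p1 = length p" unfolding p1_def using kA by (intro fold_len) auto
    have pne: "p \<noteq> []" using 3 j by auto
    then obtain p0 c' where p1: "p1 = p0 @ [c']" using lp1
      by (metis length_0_conv rev_exhaust)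
    have lp0: "Suc (length p0) = length p" using p1 lp1 by simp
    define tt where "tt = mu m c' (m a a)"
    define y where "y = nu m tt a"
    have yy: "nu m c' (m a a) = m y y" unfolding y_def tt_def by (rule rump_r)
    have B: "R_at m (length p) (p1 @ [m a a, a] @ q) = p0 @ [m y y, tt] @ a # q"
      using R_at_L3[of m p0 c' "m a a" "a # q"] lp0 p1 by (simp add: yy tt_def)
    have up1: "[j..<Suc (length p)] = [j..<length p] @ [length p]" using 3 by (rule upt_Suc_append)
    show ?thesis
    proof (cases "q = []")
      case True
      have "length t - 1 = Suc (length p)" using lt True by simp
      then have ys: "fold (R_at m) [j..<length t - 1] t = p0 @ [m y y, tt, a]"
        using A B True by (simp only: up1 fold_append o_apply fold.simps id_apply) simp
      have "length t - 2 = Suc (length p0)" "length t - 1 = Suc (Suc (length p0))"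
        using lt True lp0 by auto
      moreover have "length t \<noteq> j" using 3 lt by simp
      moreover note this
      ultimately have "dr m j t = p0 @ [m y y, y] @ []"
        unfolding dr_ne[OF \<open>length t \<noteq> j\<close>[symmetric]] Let_def ys by (simp add: nth_append y_def)
      then show ?thesis by blast
    next
      case False
      have e: "Suc (length p) + (length t - 1 - Suc (length p)) = length t - 1" using lt False
        by (cases q) auto
      have le: "j \<le> Suc (length p)" using 3 by simp
      have sp: "[j..<length t - 1] = [j..<Suc (length p)] @ [Suc (length p)..<length t - 1]"
        using upt_add_eq_append[OF le, of "length t - 1 - Suc (length p)"] unfolding e .
      have sp2: "[Suc (length p)..<length t - 1] = Suc (length p) # [Suc (Suc (length p))..<length t - 1]"
        using lt False by (intro upt_conv_Cons) (cases q, auto)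
      have C: "R_at m (Suc (length p)) (p0 @ [m y y, tt] @ a # q) = (p0 @ [m y y, y]) @ mu m tt a # q"
        using R_at_L3[of m "p0 @ [m y y]" tt a q] lp0 by (simp add: y_def)
      have kD: "\<forall>k\<in>set [Suc (Suc (length p))..<length t - 1]. length (p0 @ [m y y, y]) < k"
        using lp0 by auto
      obtain q'' where D: "fold (R_at m) [Suc (Suc (length p))..<length t - 1] ((p0 @ [m y y, y]) @ mu m tt a # q)
          = (p0 @ [m y y, y]) @ q''"
        using fold_F2[OF kD, of m "mu m tt a # q"] by auto
      have ys: "fold (R_at m) [j..<length t - 1] t = (p0 @ [m y y, y]) @ q''"
        using A B C D by (simp only: sp sp2 up1 fold_append o_apply fold.simps id_apply)
      have "length (fold (R_at m) [j..<length t - 1] t) = length t" using j by (intro fold_len) auto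
      then have ln: "length ((p0 @ [m y y, y]) @ q'') = length t" using ys by simp
      have ge: "length t - 2 \<ge> length (p0 @ [m y y, y])" using lp0 lt False by (cases q) auto
      have "length t \<noteq> j" using 3 lt by simp
      then have "dr m j t = p0 @ [m y y, y] @ (take (length t - 2 - length (p0 @ [m y y, y])) q'' @
        [nu m (((p0 @ [m y y, y]) @ q'') ! (length t - 2)) (((p0 @ [m y y, y]) @ q'') ! (length t - 1))])"
        unfolding dr_ne[OF \<open>length t \<noteq> j\<close>[symmetric]] Let_def ys ln using ge by (simp add: take_append take_Cons')
      then show ?thesis by blast
    qed
  qed
qed


lemma boundary_deg:
  assumes "t \<in> D_gens m N"
  shows "boundary_gen m N t \<in> span_gen (D_gens m (N - 1))"
proof -
  obtain p a q where t: "t = p @ [m a a, a] @ q" and lt: "length t = N"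
    using Dg_elim[OF assms] by blast
  let ?i = "Suc (length p)"
  have N2: "2 \<le> N" using t lt by simp
  have bd: "boundary_gen m N t = (\<Sum>j\<in>{1..N}. frag_cmul ((-1) ^ (j + 1)) (frag_of (dl m j t)))
       - (\<Sum>j\<in>{1..N}. frag_cmul ((-1) ^ (j + 1)) (frag_of (dr m j t)))"
    unfolding boundary_gen_def by (simp add: frag_cmul_diff2 sum_subtractf)
  have iN: "?i \<in> {1..N}" "Suc ?i \<in> {1..N}" using t lt by auto
  have L: "(\<Sum>j\<in>{1..N}. frag_cmul ((-1) ^ (j + 1)) (frag_of (dl m j t))) \<in> span_gen (D_gens m (N - 1))"
  proof (rule sum_pair[OF _ iN])
    show "dl m ?i t = dl m (Suc ?i) t" unfolding t by (rule DL_eq)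
    fix j assume j: "j \<in> {1..N}" "j \<noteq> ?i" "j \<noteq> Suc ?i"
    then obtain p0 b q0 where e: "dl m j t = p0 @ [m b b, b] @ q0"
      using DL_form[OF _ _ _ _ t] lt by fastforce
    have "length (dl m j t) = N - 1" using j lt N2 by (intro length_dl[of j t m, simplified lt]) auto
    then show "dl m j t \<in> D_gens m (N - 1)" using e by (intro Dg_intro)
  qed simp
  have R: "(\<Sum>j\<in>{1..N}. frag_cmul ((-1) ^ (j + 1)) (frag_of (dr m j t))) \<in> span_gen (D_gens m (N - 1))"
  proof (rule sum_pair[OF _ iN])
    show "dr m ?i t = dr m (Suc ?i) t" unfolding t by (rule DR_eq)
    fix j assume j: "j \<in> {1..N}" "j \<noteq> ?i" "j \<noteq> Suc ?i"
    then obtain p0 b q0 where e: "dr m j t = p0 @ [m b b, b] @ q0"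
      using DR_form[OF _ _ _ _ t] lt by fastforce
    have "length (dr m j t) = N - 1" using j lt N2 by (intro length_dr[of j t m, simplified lt]) auto
    then show "dr m j t \<in> D_gens m (N - 1)" using e by (intro Dg_intro)
  qed simp
  show ?thesis unfolding bd using L R by (rule span_diff)
qed

lemma boundary_span:
  assumes "c \<in> span_gen (D_gens m N)"
  shows "YB_boundary m N c \<in> span_gen (D_gens m (N - 1))"
  using assms unfolding YB_boundary_def
proof (induction rule: span_gen.induct)
  case zero then show ?case by (simp add: span_gen.zero)
next
  case (gen t) then show ?case using boundary_deg[of t N] by simp
next
  case (neg c) then show ?case by (simp add: frag_extend_minus span_gen.neg)
next
  case (add c d) then show ?case by (simp add: frag_extend_add span_gen.add)
qed

end


lemma D_gens_1: "D_gens m (Suc 0) = {}"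
  unfolding D_gens_def by auto

theorem mainTheorem3:
  fixes m :: "'a \<Rightarrow> 'a \<Rightarrow> 'a"
  assumes "rump_right_quasigroup m"
  shows "\<forall>n. \<forall>c \<in> C_D m (Suc n). YB_boundary m (Suc n) c \<in> C_D m n"
proof (intro allI ballI)
  fix n c
  assume c: "c \<in> C_D m (Suc n)"
  show "YB_boundary m (Suc n) c \<in> C_D m n"
  proof (cases "n = 0")
    case True
    then have "c = 0" using c by (simp add: C_D_def)
    then show ?thesis by (simp add: YB_boundary_def C_D_def span_gen.zero)
  next
    case False
    then have cs: "c \<in> span_gen (D_gens m (Suc n))" using c by (simp add: C_D_def)
    have b: "YB_boundary m (Suc n) c \<in> span_gen (D_gens m n)"
      using boundary_span[OF assms cs] by simp
    show ?thesis
    proof (cases "2 \<le> n")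
      case True then show ?thesis using b by (simp add: C_D_def)
    next
      case False
      then have "n = Suc 0" using \<open>n \<noteq> 0\<close> by simp
      then have "YB_boundary m (Suc n) c = 0" using b span_empty D_gens_1 by metis
      then show ?thesis by (simp add: C_D_def span_gen.zero)
    qed
  qed
qed

end
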